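(* Let $b(r),h(r)$ be smooth positive functions on an interval of $r>0$ and consider the metric $ds^2=-b^2dt^2+\dfrac{h^2}{b^2}dr^2+r^2(d\theta^2+\sin^2\theta\,d\phi^2)$. Let $\kappa_1,\kappa_2,\kappa_3$ be constants and $$K_{kl}=(\kappa_2r^2-2\kappa_3b^2)u_ku_l+(\kappa_1+2\kappa_2r^2+\kappa_3b^2)g_{kl}-\kappa_2r^2\,\chi_k\chi_l,$$ and let $T_{kl}=(\mu+p_\perp)u_ku_l+p_\perp g_{kl}+(p_r-p_\perp)\chi_k\chi_l$ be an anisotropic fluid stress-energy tensor with functions $\mu(r),p_r(r),p_\perp(r)$. Suppose the conformal Killing gravity field equations $R_{kl}-\tfrac12Rg_{kl}=T_{kl}+K_{kl}$ hold. Then $p_r=-\mu$ if and only if there is a constant $\kappa_4$ such that $$\frac{1}{h^2}=\kappa_3r^2+\kappa_4 .$$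
   Context: $u_k$ is the unit timelike covector with components $u_0=-b$ and all others zero; $\chi_k$ is the unit radial covector with $\chi_r=h/b$ and all others zero. $R_{kl}$ is the Ricci tensor and $R$ the scalar curvature of the metric. *)

theory Defs
  imports "HOL-Analysis.Analysis"
begin

definition smooth_on :: "(real \<Rightarrow> real) \<Rightarrow> real set \<Rightarrow> bool" where
  "smooth_on f I \<longleftrightarrow> (\<forall>n. \<forall>x\<in>I. (deriv ^^ n) f differentiable (at x))"

text \<open>Points of spacetime in coordinates x 0 = t, x 1 = r, x 2 = theta, x 3 = phi
  (components with index at least 4 are irrelevant).\<close>
type_synonym pt = "nat \<Rightarrow> real"
type_synonym metric = "nat \<Rightarrow> nat \<Rightarrow> pt \<Rightarrow> real"

definition pd :: "nat \<Rightarrow> (pt \<Rightarrow> real) \<Rightarrow> pt \<Rightarrow> real" where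
  "pd a f x = deriv (\<lambda>s. f (x(a := s))) (x a)"

definition inv_metric :: "metric \<Rightarrow> pt \<Rightarrow> nat \<Rightarrow> nat \<Rightarrow> real" where
  "inv_metric g x = (THE G. (\<forall>i<4. \<forall>j<4. (\<Sum>k<4. g i k x * G k j) = (if i = j then 1 else 0))
                         \<and> (\<forall>i j. \<not> (i < 4 \<and> j < 4) \<longrightarrow> G i j = 0))"

definition christoffel :: "metric \<Rightarrow> nat \<Rightarrow> nat \<Rightarrow> nat \<Rightarrow> pt \<Rightarrow> real" where
  "christoffel g k i j x = (1/2) * (\<Sum>l<4. inv_metric g x k l *
      (pd i (g j l) x + pd j (g i l) x - pd l (g i j) x))"

definition ricci :: "metric \<Rightarrow> nat \<Rightarrow> nat \<Rightarrow> pt \<Rightarrow> real" where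
  "ricci g i j x = (\<Sum>k<4. pd k (christoffel g k i j) x - pd j (christoffel g k i k) x
      + (\<Sum>l<4. christoffel g k k l x * christoffel g l i j x
               - christoffel g k j l x * christoffel g l i k x))"

definition scalar_curv :: "metric \<Rightarrow> pt \<Rightarrow> real" where
  "scalar_curv g x = (\<Sum>i<4. \<Sum>j<4. inv_metric g x i j * ricci g i j x)"

definition sss_metric :: "(real \<Rightarrow> real) \<Rightarrow> (real \<Rightarrow> real) \<Rightarrow> metric" where
  "sss_metric b h i j x =
     (if i = 0 \<and> j = 0 then - ((b (x 1))^2)
      else if i = 1 \<and> j = 1 then (h (x 1))^2 / (b (x 1))^2
      else if i = 2 \<and> j = 2 then (x 1)^2
      else if i = 3 \<and> j = 3 then (x 1)^2 * (sin (x 2))^2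
      else 0)"

definition u_cov :: "(real \<Rightarrow> real) \<Rightarrow> pt \<Rightarrow> nat \<Rightarrow> real" where
  "u_cov b x k = (if k = 0 then - b (x 1) else 0)"

definition chi_cov :: "(real \<Rightarrow> real) \<Rightarrow> (real \<Rightarrow> real) \<Rightarrow> pt \<Rightarrow> nat \<Rightarrow> real" where
  "chi_cov b h x k = (if k = 1 then h (x 1) / b (x 1) else 0)"

end

theory Submission
  imports Defs
begin

definition ginv :: "(real \<Rightarrow> real) \<Rightarrow> (real \<Rightarrow> real) \<Rightarrow> nat \<Rightarrow> real \<Rightarrow> real \<Rightarrow> real" where
  "ginv b h k r th = (if k = 0 then - 1 / (b r)^2 else if k = 1 then (b r)^2 / (h r)^2
     else if k = 2 then 1 / r^2 else if k = 3 then 1 / (r^2 * (sin th)^2) else 0)"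

lemma sum4: "(\<Sum>k<(4::nat). f k) = f 0 + f 1 + f 2 + (f 3 :: real)"
  by (simp add: eval_nat_numeral)

lemma inv_metric_eq:
  assumes "b (x 1) \<noteq> 0" "h (x 1) \<noteq> 0" "x 1 \<noteq> 0" "sin (x 2) \<noteq> 0"
  shows "inv_metric (sss_metric b h) x = (\<lambda>k l. if k = l then ginv b h k (x 1) (x 2) else 0)"
  unfolding inv_metric_def
proof (rule the_equality)
  let ?G = "(\<lambda>k l. if k = l then ginv b h k (x 1) (x 2) else 0)"
  show "(\<forall>i<4. \<forall>j<4. (\<Sum>k<4. sss_metric b h i k x * ?G k j) = (if i = j then 1 else 0)) \<and>
    (\<forall>i j. \<not> (i < 4 \<and> j < 4) \<longrightarrow> ?G i j = 0)"
    using assms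
    by (auto simp: sum4 sss_metric_def ginv_def less_Suc_eq eval_nat_numeral field_simps)
next
  fix G
  assume H: "(\<forall>i<4. \<forall>j<4. (\<Sum>k<4. sss_metric b h i k x * G k j) = (if i = j then 1 else 0)) \<and>
    (\<forall>i j. \<not> (i < 4 \<and> j < 4) \<longrightarrow> G i j = 0)"
  show "G = (\<lambda>k l. if k = l then ginv b h k (x 1) (x 2) else 0)"
  proof (intro ext)
    fix i j
    show "G i j = (if i = j then ginv b h i (x 1) (x 2) else 0)"
    proof (cases "i < 4 \<and> j < 4")
      case True
      then have E: "(\<Sum>k<4. sss_metric b h i k x * G k j) = (if i = j then 1 else 0)" using H by auto
      have "i = 0 \<or> i = 1 \<or> i = 2 \<or> i = 3" using True by auto
      then show ?thesis using E assms
        by (auto simp: sum4 sss_metric_def ginv_def field_simps)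
    next
      case False
      then show ?thesis using H by (auto simp: ginv_def)
    qed
  qed
qed

definition dg :: "(real \<Rightarrow> real) \<Rightarrow> (real \<Rightarrow> real) \<Rightarrow> nat \<Rightarrow> nat \<Rightarrow> nat \<Rightarrow> real \<Rightarrow> real \<Rightarrow> real" where
  "dg b h a i j r th = (if a = 1 then
       (if i = 0 \<and> j = 0 then - (2 * b r * deriv b r)
        else if i = 1 \<and> j = 1 then 2 * h r * deriv h r / (b r)^2 - 2 * (h r)^2 * deriv b r / (b r)^3
        else if i = 2 \<and> j = 2 then 2 * r
        else if i = 3 \<and> j = 3 then 2 * r * (sin th)^2 else 0)
     else if a = 2 then (if i = 3 \<and> j = 3 then r^2 * (2 * sin th * cos th) else 0) else 0)"

lemma pd_metric:
  assumes "b differentiable (at (x 1))" "h differentiable (at (x 1))" "b (x 1) \<noteq> 0"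
  shows "pd a (sss_metric b h i j) x = dg b h a i j (x 1) (x 2)"
proof -
  have db: "(b has_real_derivative deriv b (x 1)) (at (x 1))"
    using assms(1) DERIV_deriv_iff_real_differentiable by blast
  have dh: "(h has_real_derivative deriv h (x 1)) (at (x 1))"
    using assms(2) DERIV_deriv_iff_real_differentiable by blast
  consider "a = 1" | "a = 2" | "a \<noteq> 1 \<and> a \<noteq> 2" by blast
  then show ?thesis
  proof cases
    case 1
    define r where "r = x 1"
    have d00: "((\<lambda>s. - ((b s)^2)) has_real_derivative - (2 * b r * deriv b r)) (at r)"
      unfolding r_def by (rule derivative_eq_intros db refl | simp)+
    have d11: "((\<lambda>s. (h s)^2 / (b s)^2) has_real_derivative
         2 * h r * deriv h r / (b r)^2 - 2 * (h r)^2 * deriv b r / (b r)^3) (at r)"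
      unfolding r_def
      apply (rule derivative_eq_intros db dh refl)+
      using assms(3) by (simp_all add: field_simps power2_eq_square power3_eq_cube)
    have d22: "((\<lambda>s. s^2) has_real_derivative 2 * r) (at r)"
      by (rule derivative_eq_intros refl | simp)+
    have d33: "((\<lambda>s. s^2 * (sin (x 2))^2) has_real_derivative 2 * r * (sin (x 2))^2) (at r)"
      by (rule derivative_eq_intros refl | simp)+
    have D: "((\<lambda>s. sss_metric b h i j (x(a := s))) has_real_derivative dg b h a i j (x 1) (x 2)) (at (x a))"
    proof -
      consider "i = 0 \<and> j = 0" | "i = 1 \<and> j = 1" | "i = 2 \<and> j = 2" | "i = 3 \<and> j = 3"
        | "\<not> (i = 0 \<and> j = 0) \<and> \<not> (i = 1 \<and> j = 1) \<and> \<not> (i = 2 \<and> j = 2) \<and> \<not> (i = 3 \<and> j = 3)" by blast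
      then show ?thesis
      proof cases
        case 1 then show ?thesis using d00 \<open>a = 1\<close> by (simp add: sss_metric_def dg_def r_def)
      next
        case 2 then show ?thesis using d11 \<open>a = 1\<close> by (simp add: sss_metric_def dg_def r_def)
      next
        case 3 then show ?thesis using d22 \<open>a = 1\<close> by (simp add: sss_metric_def dg_def r_def)
      next
        case 4 then show ?thesis using d33 \<open>a = 1\<close> by (simp add: sss_metric_def dg_def r_def)
      next
        case 5 then have "(\<lambda>s. sss_metric b h i j (x(a := s))) = (\<lambda>s. 0)"
          by (auto simp: sss_metric_def)
        then show ?thesis using 5 \<open>a = 1\<close> by (auto simp: dg_def)
      qed
    qed
    show ?thesis unfolding pd_def by (rule DERIV_imp_deriv[OF D])
  next
    case 2
    have d33: "((\<lambda>s. (x 1)^2 * (sin s)^2) has_real_derivative (x 1)^2 * (2 * sin (x 2) * cos (x 2))) (at (x 2))"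
      by (rule derivative_eq_intros refl | simp)+
    have D: "((\<lambda>s. sss_metric b h i j (x(a := s))) has_real_derivative dg b h a i j (x 1) (x 2)) (at (x a))"
    proof (cases "i = 3 \<and> j = 3")
      case True then show ?thesis using d33 2 by (simp add: sss_metric_def dg_def)
    next
      case False
      then have "(\<lambda>s. sss_metric b h i j (x(a := s))) = (\<lambda>s. sss_metric b h i j x)"
        using 2 by (auto simp: sss_metric_def)
      then show ?thesis using False 2 by (auto simp: dg_def)
    qed
    show ?thesis unfolding pd_def by (rule DERIV_imp_deriv[OF D])
  next
    case 3
    then have e: "(\<lambda>s. sss_metric b h i j (x(a := s))) = (\<lambda>s. sss_metric b h i j x)"
      by (auto simp: sss_metric_def)
    show ?thesis unfolding pd_def e using 3 by (simp add: dg_def)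
  qed
qed

definition Gam :: "(real \<Rightarrow> real) \<Rightarrow> (real \<Rightarrow> real) \<Rightarrow> nat \<Rightarrow> nat \<Rightarrow> nat \<Rightarrow> real \<Rightarrow> real \<Rightarrow> real" where
  "Gam b h k i j r th = 1/2 * ginv b h k r th * (dg b h i j k r th + dg b h j i k r th - dg b h k i j r th)"

definition good :: "(real \<Rightarrow> real) \<Rightarrow> (real \<Rightarrow> real) \<Rightarrow> real set \<Rightarrow> bool" where
  "good b h I \<longleftrightarrow> open I \<and> I \<subseteq> {0<..} \<and> (\<forall>r\<in>I. b differentiable (at r) \<and> h differentiable (at r)
      \<and> deriv b differentiable (at r) \<and> deriv h differentiable (at r)
      \<and> b r \<noteq> 0 \<and> h r \<noteq> 0)"

lemma chr_eq:
  assumes G: "good b h I" and x: "x 1 \<in> I" "0 < x 2" "x 2 < pi" and k: "k < 4"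
  shows "christoffel (sss_metric b h) k i j x = Gam b h k i j (x 1) (x 2)"
proof -
  have s: "sin (x 2) \<noteq> 0" using x sin_gt_zero by force
  have r: "x 1 \<noteq> 0" using G x unfolding good_def by auto
  have bh: "b differentiable (at (x 1))" "h differentiable (at (x 1))" "b (x 1) \<noteq> 0" "h (x 1) \<noteq> 0"
    using G x unfolding good_def by auto
  have "k = 0 \<or> k = 1 \<or> k = 2 \<or> k = 3" using k by auto
  then show ?thesis
    unfolding christoffel_def inv_metric_eq[of b x h, OF bh(3) bh(4) r s] pd_metric[of b x h, OF bh(1,2,3)] Gam_def
    by (auto simp: sum4)
qed

lemma pd_chr:
  assumes G: "good b h I" and x: "x 1 \<in> I" "0 < x 2" "x 2 < pi" and k: "k < 4"
  shows "pd a (christoffel (sss_metric b h) k i j) x = deriv (\<lambda>s. Gam b h k i j ((x(a:=s)) 1) ((x(a:=s)) 2)) (x a)"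
  unfolding pd_def
proof (rule deriv_cong_ev[OF _ refl])
  have ev: "eventually (\<lambda>s. (x(a:=s)) 1 \<in> I \<and> 0 < (x(a:=s)) 2 \<and> (x(a:=s)) 2 < pi) (nhds (x a))"
  proof -
    consider "a = 1" | "a = 2" | "a \<noteq> 1 \<and> a \<noteq> 2" by blast
    then show ?thesis
    proof cases
      case 1
      have "open I" using G good_def by auto
      then have "eventually (\<lambda>s. s \<in> I) (nhds (x a))" using x 1 eventually_nhds_in_open by auto
      then show ?thesis using 1 x by (auto elim: eventually_mono)
    next
      case 2
      have "eventually (\<lambda>s. s \<in> {0<..<pi}) (nhds (x a))" using x 2
        by (intro eventually_nhds_in_open) auto
      then show ?thesis using 2 x by (auto elim: eventually_mono)
    next
      case 3
      then show ?thesis using x by auto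
    qed
  qed
  show "eventually (\<lambda>s. christoffel (sss_metric b h) k i j (x(a := s)) = Gam b h k i j ((x(a:=s)) 1) ((x(a:=s)) 2)) (nhds (x a))"
    using ev by (rule eventually_mono) (intro chr_eq[OF G _ _ _ k], auto)
qed


lemma Gam_zero[simp]: "Gam b h 2 0 0 r th = 0" "Gam b h 2 1 1 r th = 0"
  by (simp_all add: Gam_def ginv_def dg_def)

lemma dGams:
  assumes G: "good b h I" and r: "r \<in> I" and th: "sin th \<noteq> 0"
  shows "deriv (\<lambda>s. Gam b h 1 0 0 s th) r =
           (3 * (b r)^2 * (deriv b r)^2 + (b r)^3 * deriv (deriv b) r) / (h r)^2
           - 2 * (b r)^3 * deriv b r * deriv h r / (h r)^3"
    and "deriv (\<lambda>s. Gam b h 1 1 1 s th) r =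
           (deriv (deriv h) r * h r - (deriv h r)^2) / (h r)^2
           - (deriv (deriv b) r * b r - (deriv b r)^2) / (b r)^2"
    and "deriv (\<lambda>s. Gam b h 0 1 0 s th) r = (deriv (deriv b) r * b r - (deriv b r)^2) / (b r)^2"
    and "deriv (\<lambda>s. Gam b h 2 1 2 s th) r = - 1 / r^2"
    and "deriv (\<lambda>s. Gam b h 3 1 3 s th) r = - 1 / r^2"
proof -
  have db: "(b has_real_derivative deriv b r) (at r)"
    and dh: "(h has_real_derivative deriv h r) (at r)"
    and dbb: "(deriv b has_real_derivative deriv (deriv b) r) (at r)"
    and dhh: "(deriv h has_real_derivative deriv (deriv h) r) (at r)"
    using G r unfolding good_def by (auto simp: DERIV_deriv_iff_real_differentiable)
  have nz: "b r \<noteq> 0" "h r \<noteq> 0" "r \<noteq> 0" using G r unfolding good_def by auto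
  show "deriv (\<lambda>s. Gam b h 1 0 0 s th) r =
           (3 * (b r)^2 * (deriv b r)^2 + (b r)^3 * deriv (deriv b) r) / (h r)^2
           - 2 * (b r)^3 * deriv b r * deriv h r / (h r)^3"
    unfolding Gam_def ginv_def dg_def
    apply simp
    apply (rule DERIV_imp_deriv)
    apply (rule DERIV_cong)
     apply (rule db dh dbb dhh derivative_eq_intros refl | (simp add: nz th; fail))+
    using nz by (simp_all add: field_simps power2_eq_square power3_eq_cube)
  show "deriv (\<lambda>s. Gam b h 1 1 1 s th) r =
           (deriv (deriv h) r * h r - (deriv h r)^2) / (h r)^2
           - (deriv (deriv b) r * b r - (deriv b r)^2) / (b r)^2"
    unfolding Gam_def ginv_def dg_def
    apply simp
    apply (rule DERIV_imp_deriv)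
    apply (rule DERIV_cong)
     apply (rule db dh dbb dhh derivative_eq_intros refl | (simp add: nz th; fail))+
    using nz by (simp_all add: field_simps power2_eq_square power3_eq_cube)
  show "deriv (\<lambda>s. Gam b h 0 1 0 s th) r = (deriv (deriv b) r * b r - (deriv b r)^2) / (b r)^2"
    unfolding Gam_def ginv_def dg_def
    apply simp
    apply (rule DERIV_imp_deriv)
    apply (rule DERIV_cong)
     apply (rule db dh dbb dhh derivative_eq_intros refl | (simp add: nz th; fail))+
    using nz by (simp_all add: field_simps power2_eq_square power3_eq_cube)
  show "deriv (\<lambda>s. Gam b h 2 1 2 s th) r = - 1 / r^2"
    unfolding Gam_def ginv_def dg_def
    apply simp
    apply (rule DERIV_imp_deriv)
    apply (rule DERIV_cong)
     apply (rule db dh dbb dhh derivative_eq_intros refl | (simp add: nz th; fail))+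
    using nz by (simp_all add: field_simps power2_eq_square power3_eq_cube)
  show "deriv (\<lambda>s. Gam b h 3 1 3 s th) r = - 1 / r^2"
    unfolding Gam_def ginv_def dg_def
    apply (simp add: th)
    apply (rule DERIV_imp_deriv)
    apply (rule DERIV_cong)
     apply (rule db dh dbb dhh derivative_eq_intros refl | (simp add: nz th; fail))+
    using nz th by (simp_all add: field_simps power2_eq_square power3_eq_cube)
qed

lemma ricci_comb:
  assumes G: "good b h I" and x: "x 1 \<in> I" "0 < x 2" "x 2 < pi"
  shows "ricci (sss_metric b h) 0 0 x / (b (x 1))^2 + (b (x 1))^2 / (h (x 1))^2 * ricci (sss_metric b h) 1 1 x
     = 2 * (b (x 1))^2 * deriv h (x 1) / (x 1 * (h (x 1))^3)"
proof -
  have s: "sin (x 2) \<noteq> 0" using x sin_gt_zero by force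
  have nz: "b (x 1) \<noteq> 0" "h (x 1) \<noteq> 0" "x 1 \<noteq> 0" using G x unfolding good_def by auto
  note d = dGams[OF G x(1) s]
  show ?thesis
  unfolding ricci_def sum4
  apply (simp add: pd_chr[OF G x] chr_eq[OF G x] d del: One_nat_def)
  apply (simp add: Gam_def ginv_def dg_def s nz del: One_nat_def)
  using nz apply (simp add: field_simps del: One_nat_def)
  apply algebra
  done
qed

theorem proposition6:
  fixes b h \<mu> p_r p_perp :: "real \<Rightarrow> real"
    and I :: "real set"
    and \<kappa>\<^sub>1 \<kappa>\<^sub>2 \<kappa>\<^sub>3 :: real
  assumes I_interval: "is_interval I" and I_open: "open I" and I_pos: "I \<subseteq> {0<..}"
    and b_smooth: "smooth_on b I" and h_smooth: "smooth_on h I"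
    and b_pos: "\<forall>r\<in>I. b r > 0" and h_pos: "\<forall>r\<in>I. h r > 0"
    and field_eqs:
      "\<forall>x. x 1 \<in> I \<and> 0 < x 2 \<and> x 2 < pi \<longrightarrow>
         (\<forall>k<4. \<forall>l<4.
            ricci (sss_metric b h) k l x - (1/2) * scalar_curv (sss_metric b h) x * sss_metric b h k l x
            = ((\<mu> (x 1) + p_perp (x 1)) * u_cov b x k * u_cov b x l
               + p_perp (x 1) * sss_metric b h k l x
               + (p_r (x 1) - p_perp (x 1)) * chi_cov b h x k * chi_cov b h x l)
            + ((\<kappa>\<^sub>2 * (x 1)^2 - 2 * \<kappa>\<^sub>3 * (b (x 1))^2) * u_cov b x k * u_cov b x l
               + (\<kappa>\<^sub>1 + 2 * \<kappa>\<^sub>2 * (x 1)^2 + \<kappa>\<^sub>3 * (b (x 1))^2) * sss_metric b h k l x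
               - \<kappa>\<^sub>2 * (x 1)^2 * chi_cov b h x k * chi_cov b h x l))"
  shows "(\<forall>r\<in>I. p_r r = - \<mu> r) \<longleftrightarrow> (\<exists>\<kappa>\<^sub>4. \<forall>r\<in>I. 1 / (h r)^2 = \<kappa>\<^sub>3 * r^2 + \<kappa>\<^sub>4)"
proof -
  have G: "good b h I"
  proof -
    have "\<forall>r\<in>I. b differentiable (at r) \<and> h differentiable (at r)
      \<and> deriv b differentiable (at r) \<and> deriv h differentiable (at r)"
    proof
      fix r assume r: "r \<in> I"
      have "(deriv ^^ 0) b differentiable (at r)" "(deriv ^^ 1) b differentiable (at r)"
        "(deriv ^^ 0) h differentiable (at r)" "(deriv ^^ 1) h differentiable (at r)"
        using b_smooth h_smooth r unfolding smooth_on_def by blast+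
      then show "b differentiable (at r) \<and> h differentiable (at r)
      \<and> deriv b differentiable (at r) \<and> deriv h differentiable (at r)" by simp
    qed
    then show ?thesis unfolding good_def using I_open I_pos b_pos h_pos by fastforce
  qed
  have key: "p_r r + \<mu> r = 2 * (b r)^2 * (\<kappa>\<^sub>3 + deriv h r / (r * (h r)^3))" if r: "r \<in> I" for r
  proof -
    define x :: pt where "x = (\<lambda>n. if n = 1 then r else if n = 2 then pi/2 else 0)"
    have x1: "x 1 = r" and x2: "x 2 = pi/2" unfolding x_def by auto
    have x1s: "x (Suc 0) = r" unfolding x_def by auto
    have xr: "x 1 \<in> I" "0 < x 2" "x 2 < pi" unfolding x1 x2 using r pi_gt_zero by auto
    have nz: "b r \<noteq> 0" "h r \<noteq> 0" "r \<noteq> 0" using r b_pos h_pos I_pos by force+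
    have FE: "\<forall>k<4. \<forall>l<4.
            ricci (sss_metric b h) k l x - (1/2) * scalar_curv (sss_metric b h) x * sss_metric b h k l x
            = ((\<mu> (x 1) + p_perp (x 1)) * u_cov b x k * u_cov b x l
               + p_perp (x 1) * sss_metric b h k l x
               + (p_r (x 1) - p_perp (x 1)) * chi_cov b h x k * chi_cov b h x l)
            + ((\<kappa>\<^sub>2 * (x 1)^2 - 2 * \<kappa>\<^sub>3 * (b (x 1))^2) * u_cov b x k * u_cov b x l
               + (\<kappa>\<^sub>1 + 2 * \<kappa>\<^sub>2 * (x 1)^2 + \<kappa>\<^sub>3 * (b (x 1))^2) * sss_metric b h k l x
               - \<kappa>\<^sub>2 * (x 1)^2 * chi_cov b h x k * chi_cov b h x l)"
      using field_eqs xr by blast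
    define R0 where "R0 = ricci (sss_metric b h) 0 0 x"
    define R1 where "R1 = ricci (sss_metric b h) 1 1 x"
    define S where "S = scalar_curv (sss_metric b h) x"
    have E0: "R0 = (b r)^2 * (\<mu> r - \<kappa>\<^sub>2 * r^2 - 3 * \<kappa>\<^sub>3 * (b r)^2 - \<kappa>\<^sub>1 - S/2)"
      using FE[rule_format, of 0 0] unfolding R0_def S_def x1
      by (simp add: sss_metric_def u_cov_def chi_cov_def x1 x1s power2_eq_square algebra_simps)
    define q where "q = (h r)^2 / (b r)^2"
    have g11: "sss_metric b h 1 1 x = q" unfolding q_def by (simp add: sss_metric_def x1 x1s)
    have u1: "u_cov b x 1 = 0" by (simp add: u_cov_def)
    have c1: "chi_cov b h x 1 * chi_cov b h x 1 = q" unfolding q_def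
      by (simp add: chi_cov_def x1 x1s power2_eq_square)
    have E1: "R1 = q * (p_r r + \<kappa>\<^sub>1 + \<kappa>\<^sub>2 * r^2 + \<kappa>\<^sub>3 * (b r)^2 + S/2)"
      using FE[rule_format, of 1 1] unfolding R1_def[symmetric] S_def[symmetric] x1 g11 u1 mult.assoc c1
      by (simp add: algebra_simps)
    have C: "R0 / (b r)^2 + (b r)^2 / (h r)^2 * R1 = 2 * (b r)^2 * deriv h r / (r * (h r)^3)"
      using ricci_comb[OF G xr] unfolding R0_def R1_def x1 .
    have "R0 / (b r)^2 = \<mu> r - \<kappa>\<^sub>2 * r^2 - 3 * \<kappa>\<^sub>3 * (b r)^2 - \<kappa>\<^sub>1 - (1/2) * S"
      using nz unfolding E0 by simp
    moreover have "(b r)^2 / (h r)^2 * R1 = p_r r + \<kappa>\<^sub>1 + \<kappa>\<^sub>2 * r^2 + \<kappa>\<^sub>3 * (b r)^2 + (1/2) * S"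
      using nz unfolding E1 q_def by simp
    ultimately have "R0 / (b r)^2 + (b r)^2 / (h r)^2 * R1 = p_r r + \<mu> r - 2 * \<kappa>\<^sub>3 * (b r)^2" by simp
    then have "p_r r + \<mu> r = 2 * \<kappa>\<^sub>3 * (b r)^2 + 2 * (b r)^2 * deriv h r / (r * (h r)^3)"
      using C by linarith
    then show ?thesis by (simp add: distrib_left)
  qed
  define F where "F = (\<lambda>s. 1 / (h s)^2 - \<kappa>\<^sub>3 * s^2)"
  have dF: "(F has_real_derivative - 2 * r * (\<kappa>\<^sub>3 + deriv h r / (r * (h r)^3))) (at r)" if r: "r \<in> I" for r
  proof -
    have dh: "(h has_real_derivative deriv h r) (at r)"
      using G r unfolding good_def by (auto simp: DERIV_deriv_iff_real_differentiable)
    have nz: "h r \<noteq> 0" "r \<noteq> 0" using r h_pos I_pos by force+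
    show ?thesis unfolding F_def
      apply (rule DERIV_cong)
       apply (rule dh derivative_eq_intros refl | (simp add: nz; fail))+
      using nz by (simp add: field_simps power2_eq_square power3_eq_cube)
  qed
  have equiv: "p_r r = - \<mu> r \<longleftrightarrow> - 2 * r * (\<kappa>\<^sub>3 + deriv h r / (r * (h r)^3)) = 0" if r: "r \<in> I" for r
  proof -
    have nz: "b r \<noteq> 0" "r \<noteq> 0" using r b_pos I_pos by force+
    define Q where "Q = \<kappa>\<^sub>3 + deriv h r / (r * (h r)^3)"
    have k: "p_r r + \<mu> r = 2 * (b r)^2 * Q" using key[OF r] unfolding Q_def .
    have "p_r r = - \<mu> r \<longleftrightarrow> p_r r + \<mu> r = 0" by (rule iffI; linarith)
    also have "\<dots> \<longleftrightarrow> Q = 0" unfolding k using nz by simp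
    also have "\<dots> \<longleftrightarrow> - 2 * r * Q = 0" using nz by simp
    finally show ?thesis unfolding Q_def .
  qed
  show ?thesis
  proof
    assume A: "\<forall>r\<in>I. p_r r = - \<mu> r"
    have d0: "\<forall>r\<in>I - {}. DERIV F r :> 0" using A dF equiv by fastforce
    have "continuous_on I F"
      by (rule DERIV_continuous_on[where D = "\<lambda>r. - 2 * r * (\<kappa>\<^sub>3 + deriv h r / (r * (h r)^3))"])
         (rule has_field_derivative_at_within, erule dF)
    then obtain c where c: "\<And>r. r \<in> I \<Longrightarrow> F r = c"
      using DERIV_zero_connected_constant[OF is_interval_connected[OF I_interval] I_open finite.emptyI _ d0]
      by blast
    show "\<exists>\<kappa>\<^sub>4. \<forall>r\<in>I. 1 / (h r)^2 = \<kappa>\<^sub>3 * r^2 + \<kappa>\<^sub>4"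
      by (rule exI[of _ c]) (use c in \<open>auto simp: F_def algebra_simps\<close>)
  next
    assume "\<exists>\<kappa>\<^sub>4. \<forall>r\<in>I. 1 / (h r)^2 = \<kappa>\<^sub>3 * r^2 + \<kappa>\<^sub>4"
    then obtain c where c: "\<forall>r\<in>I. 1 / (h r)^2 = \<kappa>\<^sub>3 * r^2 + c" by blast
    show "\<forall>r\<in>I. p_r r = - \<mu> r"
    proof
      fix r assume r: "r \<in> I"
      have ev: "eventually (\<lambda>s. F s = c) (nhds r)"
        using eventually_nhds_in_open[OF I_open r] by (rule eventually_mono) (use c in \<open>auto simp: F_def\<close>)
      have "deriv F r = deriv (\<lambda>s. c) r" by (rule deriv_cong_ev[OF ev refl])
      then have "- 2 * r * (\<kappa>\<^sub>3 + deriv h r / (r * (h r)^3)) = 0"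
        using DERIV_imp_deriv[OF dF[OF r]] by simp
      then show "p_r r = - \<mu> r" using equiv[OF r] by simp
    qed
  qed
qed
end
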